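(* Let $\Delta=[-\frac{\pi}{2},\frac{\pi}{2}]$ and let $f\in H^1_0(\Delta)$. Then $$2\Big(\int_{-\pi/2}^{\pi/2}f(x)\,dx\Big)^2-\pi\int_{-\pi/2}^{\pi/2}\big(f(x)^2-f'(x)^2\big)\,dx\;\geq\;0,$$ and equality holds only when $f=0$. In other words, the bilinear form $\langle\cdot,\cdot\rangle_i$ defined below is positive definite on $H^1_0(\Delta)$.
   Context: $H^1(\Delta)$ denotes the space of absolutely continuous functions $f:\Delta\to\mathbb{R}$ whose (a.e. defined) derivative $f'$ lies in $L_2(\Delta)$. $H^1_0(\Delta)$ is the subspace of those $f\in H^1(\Delta)$ with $f(-\frac{\pi}{2})=f(\frac{\pi}{2})$. For $f,g\in H^1_0(\Delta)$ the bilinear form is $$\langle f,g\rangle_i=\frac{1}{\pi^2}\Big[2\Big(\int_{-\pi/2}^{\pi/2}f\Big)\Big(\int_{-\pi/2}^{\pi/2}g\Big)-\pi\int_{-\pi/2}^{\pi/2}\big(fg-f'g'\big)\Big].$$ *)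

theory Defs
  imports "HOL-Analysis.Analysis"
begin

definition abs_continuous_on :: "real set \<Rightarrow> (real \<Rightarrow> real) \<Rightarrow> bool" where
  "abs_continuous_on S f \<longleftrightarrow>
     (\<forall>\<epsilon>>0. \<exists>\<delta>>0. \<forall>(n::nat) (a::nat \<Rightarrow> real) (b::nat \<Rightarrow> real).
        (\<forall>k<n. a k \<le> b k \<and> {a k..b k} \<subseteq> S) \<and>
        (\<forall>i<n. \<forall>j<n. i \<noteq> j \<longrightarrow> {a i<..<b i} \<inter> {a j<..<b j} = {}) \<and>
        (\<Sum>k<n. b k - a k) < \<delta>
        \<longrightarrow> (\<Sum>k<n. \<bar>f (b k) - f (a k)\<bar>) < \<epsilon>)"

end

theory Submission
  imports Defs
begin

lemma open_small_cover:
  fixes N :: "real set"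
  assumes "negligible N" "d > 0"
  obtains T where "open T" "N \<subseteq> T" "T \<in> lmeasurable" "measure lebesgue T < d"
proof -
  have "N \<in> sets lebesgue" using assms(1) negligible_iff_null_sets by blast
  then obtain T where T: "open T" "N \<subseteq> T" "(T - N) \<in> lmeasurable" "emeasure lebesgue (T - N) < ennreal d"
    using sets_lebesgue_outer_open assms(2) by blast
  have sd: "negligible (sym_diff (T - N) T)"
    by (rule negligible_subset[OF assms(1)]) auto
  have "T \<in> lmeasurable" using lmeasurable_negligible_symdiff[OF T(3) sd] .
  moreover have "measure lebesgue T = measure lebesgue (T - N)"
    using measure_negligible_symdiff[OF T(3) sd] .
  moreover have "measure lebesgue (T - N) < d"
    using T(3,4) by (metis Sigma_Algebra.measure_def enn2real_less_iff fmeasurableD2 top.not_eq_extremum)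
  ultimately show ?thesis using that[OF T(1) T(2)] by simp
qed

lemma negligible_cbox_inter:
  fixes u v u' v' :: real
  assumes "{u<..<v} \<inter> {u'<..<v'} = {}"
  shows "negligible ({u..v} \<inter> {u'..v'})"
proof -
  have sub: "{u..v} \<inter> {u'..v'} \<subseteq> {u, v, u', v'}"
  proof
    fix x assume x: "x \<in> {u..v} \<inter> {u'..v'}"
    show "x \<in> {u, v, u', v'}"
    proof (rule ccontr)
      assume "x \<notin> {u, v, u', v'}"
      with x have "x \<in> {u<..<v} \<inter> {u'<..<v'}" by auto
      with assms show False by auto
    qed
  qed
  have "negligible {u, v, u', v'}" by (rule negligible_finite) simp
  then show ?thesis using sub negligible_subset by blast
qed

lemma ac_sum_bound:
  fixes h :: "real \<Rightarrow> real"
  assumes ac: "abs_continuous_on S h" and e: "e > 0"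
  obtains \<delta> where "\<delta> > 0"
    "\<And>P (l::'a \<Rightarrow> real) r. finite P \<Longrightarrow> (\<And>t. t \<in> P \<Longrightarrow> l t \<le> r t \<and> {l t..r t} \<subseteq> S) \<Longrightarrow>
       (\<And>t t'. t \<in> P \<Longrightarrow> t' \<in> P \<Longrightarrow> t \<noteq> t' \<Longrightarrow> {l t<..<r t} \<inter> {l t'<..<r t'} = {}) \<Longrightarrow>
       (\<Sum>t\<in>P. r t - l t) < \<delta> \<Longrightarrow> (\<Sum>t\<in>P. \<bar>h (r t) - h (l t)\<bar>) < e"
proof -
  have "\<exists>\<delta>>0. \<forall>(n::nat) (a::nat \<Rightarrow> real) (b::nat \<Rightarrow> real).
        (\<forall>k<n. a k \<le> b k \<and> {a k..b k} \<subseteq> S) \<and>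
        (\<forall>i<n. \<forall>j<n. i \<noteq> j \<longrightarrow> {a i<..<b i} \<inter> {a j<..<b j} = {}) \<and>
        (\<Sum>k<n. b k - a k) < \<delta>
        \<longrightarrow> (\<Sum>k<n. \<bar>h (b k) - h (a k)\<bar>) < e"
    using ac e unfolding abs_continuous_on_def by blast
  then obtain \<delta> where d: "\<delta> > 0" and H0: "\<forall>(n::nat) (a::nat \<Rightarrow> real) (b::nat \<Rightarrow> real).
        (\<forall>k<n. a k \<le> b k \<and> {a k..b k} \<subseteq> S) \<and>
        (\<forall>i<n. \<forall>j<n. i \<noteq> j \<longrightarrow> {a i<..<b i} \<inter> {a j<..<b j} = {}) \<and>
        (\<Sum>k<n. b k - a k) < \<delta>
        \<longrightarrow> (\<Sum>k<n. \<bar>h (b k) - h (a k)\<bar>) < e" by blast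
  note H = H0[rule_format]
  show ?thesis
  proof (rule that[OF d])
    fix P :: "'a set" and l r :: "'a \<Rightarrow> real"
    assume fP: "finite P" and P1: "\<And>t. t \<in> P \<Longrightarrow> l t \<le> r t \<and> {l t..r t} \<subseteq> S"
      and P2: "\<And>t t'. t \<in> P \<Longrightarrow> t' \<in> P \<Longrightarrow> t \<noteq> t' \<Longrightarrow> {l t<..<r t} \<inter> {l t'<..<r t'} = {}"
      and P3: "(\<Sum>t\<in>P. r t - l t) < \<delta>"
    obtain \<phi> where bij: "bij_betw \<phi> {0..<card P} P" using ex_bij_betw_nat_finite[OF fP] by blast
    have eq1: "(\<Sum>k<card P. g (\<phi> k)) = (\<Sum>t\<in>P. g t)" for g :: "'a \<Rightarrow> real"
      using sum.reindex_bij_betw[OF bij, of g] by (simp add: lessThan_atLeast0)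
    have inP: "k < card P \<Longrightarrow> \<phi> k \<in> P" for k using bij by (auto simp: bij_betw_def)
    have "(\<Sum>k<card P. \<bar>h (r (\<phi> k)) - h (l (\<phi> k))\<bar>) < e"
    proof (rule H, intro conjI allI impI)
      fix k assume "k < card P"
      then show "l (\<phi> k) \<le> r (\<phi> k)" "{l (\<phi> k)..r (\<phi> k)} \<subseteq> S" using P1 inP by auto
    next
      fix i j assume "i < card P" "j < card P" "i \<noteq> j"
      moreover have "\<phi> i \<noteq> \<phi> j" using bij calculation by (auto simp: bij_betw_def inj_on_def)
      ultimately show "{l (\<phi> i)<..<r (\<phi> i)} \<inter> {l (\<phi> j)<..<r (\<phi> j)} = {}"
        using P2 inP by auto
    next
      show "(\<Sum>k<card P. r (\<phi> k) - l (\<phi> k)) < \<delta>" using P3 eq1[of "\<lambda>t. r t - l t"] by simp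
    qed
    then show "(\<Sum>t\<in>P. \<bar>h (r t) - h (l t)\<bar>) < e"
      using eq1[of "\<lambda>t. \<bar>h (r t) - h (l t)\<bar>"] by simp
  qed
qed

lemma ftc_ac:
  fixes h h' :: "real \<Rightarrow> real"
  assumes ab: "a \<le> b" and ac: "abs_continuous_on {a..b} h" and N: "negligible N"
    and der: "\<And>x. x \<in> {a<..<b} - N \<Longrightarrow> (h has_real_derivative h' x) (at x)"
  shows "(h' has_integral (h b - h a)) {a..b}"
proof (cases "a = b")
  case True
  then show ?thesis using has_integral_null_real[of a b h'] by simp
next
  case False
  with ab have ab': "a < b" by simp
  define N' where "N' = N \<union> {a,b}"
  have N': "negligible N'" unfolding N'_def using N by (simp add: negligible_Un negligible_finite)
  define k where "k x = (if x \<in> N' then 0 else h' x)" for x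
  have "(k has_integral (h b - h a)) {a..b}"
    unfolding has_integral_factor_content_real
  proof (intro allI impI)
    fix e :: real assume e: "e > 0"
    have eb: "e*(b-a)/2 > 0" using e ab' by simp
    obtain \<delta> where \<delta>: "\<delta> > 0" and AC: "\<And>P (l::real\<times>real set \<Rightarrow> real) r. finite P \<Longrightarrow> (\<And>t. t \<in> P \<Longrightarrow> l t \<le> r t \<and> {l t..r t} \<subseteq> {a..b}) \<Longrightarrow>
       (\<And>t t'. t \<in> P \<Longrightarrow> t' \<in> P \<Longrightarrow> t \<noteq> t' \<Longrightarrow> {l t<..<r t} \<inter> {l t'<..<r t'} = {}) \<Longrightarrow>
       (\<Sum>t\<in>P. r t - l t) < \<delta> \<Longrightarrow> (\<Sum>t\<in>P. \<bar>h (r t) - h (l t)\<bar>) < e*(b-a)/2"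
      by (rule ac_sum_bound[OF ac eb, where 'a="real \<times> real set"]) blast
    obtain T where T: "open T" "N' \<subseteq> T" "T \<in> lmeasurable" "measure lebesgue T < \<delta>"
      using open_small_cover[OF N' \<delta>] by blast
    have "\<forall>x. \<exists>r>0. (x \<in> T \<longrightarrow> ball x r \<subseteq> T) \<and> (x \<in> {a<..<b} - N' \<longrightarrow>
            (\<forall>y. \<bar>y - x\<bar> < r \<longrightarrow> \<bar>h y - h x - (y - x) * h' x\<bar> \<le> e/2 * \<bar>y - x\<bar>))"
    proof
      fix x
      obtain r1 where r1: "r1 > 0" "x \<in> T \<longrightarrow> ball x r1 \<subseteq> T"
      proof (cases "x \<in> T")
        case True
        then obtain r where "r > 0" "ball x r \<subseteq> T" using T(1) open_contains_ball by blast
        then show ?thesis using that[of r] by simp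
      next
        case False
        then show ?thesis using that[of 1] by simp
      qed
      obtain r2 where r2: "r2 > 0" "x \<in> {a<..<b} - N' \<longrightarrow>
            (\<forall>y. \<bar>y - x\<bar> < r2 \<longrightarrow> \<bar>h y - h x - (y - x) * h' x\<bar> \<le> e/2 * \<bar>y - x\<bar>)"
      proof (cases "x \<in> {a<..<b} - N'")
        case True
        then have "x \<in> {a<..<b} - N" unfolding N'_def by auto
        then have "(h has_real_derivative h' x) (at x)" by (rule der)
        then have "(h has_derivative (*) (h' x)) (at x)" by (simp add: has_field_derivative_def)
        then have X: "\<forall>e>0. \<exists>d>0. \<forall>y. norm (y - x) < d \<longrightarrow> norm (h y - h x - h' x * (y - x)) \<le> e * norm (y - x)"
          unfolding has_derivative_at_alt by (rule conjunct2)
        have "e/2 > 0" using e by simp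
        from X[rule_format, OF this] obtain r where "r > 0" "\<forall>y. norm (y - x) < r \<longrightarrow> norm (h y - h x - h' x * (y - x)) \<le> e/2 * norm (y - x)"
          by blast
        then show ?thesis using that[of r] by (auto simp: mult.commute)
      next
        case False
        show ?thesis by (rule that[of 1]) (use False in auto)
      qed
      show "\<exists>r>0. (x \<in> T \<longrightarrow> ball x r \<subseteq> T) \<and> (x \<in> {a<..<b} - N' \<longrightarrow>
            (\<forall>y. \<bar>y - x\<bar> < r \<longrightarrow> \<bar>h y - h x - (y - x) * h' x\<bar> \<le> e/2 * \<bar>y - x\<bar>))"
        using r1 r2 by (intro exI[of _ "min r1 r2"]) auto
    qed
    then have "\<exists>d. \<forall>x. d x > 0 \<and> (x \<in> T \<longrightarrow> ball x (d x) \<subseteq> T) \<and> (x \<in> {a<..<b} - N' \<longrightarrow>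
            (\<forall>y. \<bar>y - x\<bar> < d x \<longrightarrow> \<bar>h y - h x - (y - x) * h' x\<bar> \<le> e/2 * \<bar>y - x\<bar>))"
      by (rule choice)
    then obtain d where dd: "\<forall>x. d x > 0 \<and> (x \<in> T \<longrightarrow> ball x (d x) \<subseteq> T) \<and> (x \<in> {a<..<b} - N' \<longrightarrow>
            (\<forall>y. \<bar>y - x\<bar> < d x \<longrightarrow> \<bar>h y - h x - (y - x) * h' x\<bar> \<le> e/2 * \<bar>y - x\<bar>))" by blast
    have d0: "\<And>x. d x > 0" and d1: "\<And>x. x \<in> T \<Longrightarrow> ball x (d x) \<subseteq> T"
      and d2: "\<And>x y. x \<in> {a<..<b} - N' \<Longrightarrow> \<bar>y - x\<bar> < d x \<Longrightarrow> \<bar>h y - h x - (y - x) * h' x\<bar> \<le> e/2 * \<bar>y - x\<bar>"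
      using dd by blast+
    show "\<exists>g. gauge g \<and> (\<forall>p. p tagged_division_of {a..b} \<and> g fine p \<longrightarrow>
            norm (sum (\<lambda>(x,K). measure lborel K *\<^sub>R k x) p - (h b - h a)) \<le> e * measure lborel {a..b})"
    proof (intro exI conjI allI impI)
      show "gauge (\<lambda>x. ball x (d x))" using d0 gauge_ball_dependent by auto
      fix p assume pf: "p tagged_division_of {a..b} \<and> (\<lambda>x. ball x (d x)) fine p"
      then have ptag: "p tagged_division_of {a..b}" and fine: "(\<lambda>x. ball x (d x)) fine p" by auto
      note pd = tagged_division_ofD[OF ptag]
      have Kint: "K = {Inf K..Sup K} \<and> Inf K \<le> Sup K \<and> x \<in> K \<and> K \<subseteq> {a..b} \<and> K \<subseteq> ball x (d x)" if kp: "(x,K) \<in> p" for x K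
      proof -
        obtain u v where uv: "K = cbox u v" using pd(4)[OF kp] by blast
        have "x \<in> K" using pd(2)[OF kp] .
        then have "u \<le> v" using uv by auto
        then show ?thesis using uv \<open>x \<in> K\<close> pd(3)[OF kp] fineD[OF fine kp] by auto
      qed
      have contK: "measure lborel K = Sup K - Inf K" if "(x,K) \<in> p" for x K
        using Kint[OF that] content_real by metis
      define P1 where "P1 = {t\<in>p. fst t \<in> N'}"
      define P2 where "P2 = p - P1"
      have fin1: "finite P1" and fin2: "finite P2" using pd(1) by (auto simp: P1_def P2_def)
      have p12: "p = P1 \<union> P2" "P1 \<inter> P2 = {}" by (auto simp: P1_def P2_def)
      define F where "F t = measure lborel (snd t) * k (fst t) - (h (Sup (snd t)) - h (Inf (snd t)))" for t
      have sum_eq: "sum (\<lambda>(x,K). measure lborel K *\<^sub>R k x) p - (h b - h a) = sum F P1 + sum F P2"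
      proof -
        have "sum (\<lambda>(x,K). measure lborel K *\<^sub>R k x) p - (h b - h a) = sum F p"
          using additive_tagged_division_1[OF ab ptag, of h]
          by (simp add: F_def sum_subtractf split_def)
        also have "\<dots> = sum F P1 + sum F P2" using p12 fin1 fin2 sum.union_disjoint by metis
        finally show ?thesis .
      qed
      have sumcont: "(\<Sum>t\<in>p. measure lborel (snd t)) = b - a"
      proof -
        have "(\<Sum>t\<in>p. measure lborel (snd t)) = (\<Sum>t\<in>p. Sup (snd t) - Inf (snd t))"
          by (rule sum.cong) (auto simp: contK)
        also have "\<dots> = b - a" using additive_tagged_division_1[OF ab ptag, of "\<lambda>x. x"]
          by (simp add: split_def)
        finally show ?thesis .
      qed
      have B2: "\<bar>sum F P2\<bar> \<le> e/2 * (b - a)"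
      proof -
        have "\<bar>F t\<bar> \<le> e/2 * measure lborel (snd t)" if "t \<in> P2" for t
        proof -
          obtain x K where t: "t = (x,K)" by (cases t)
          have tp: "(x,K) \<in> p" and xN: "x \<notin> N'" using that t by (auto simp: P1_def P2_def)
          note KK = Kint[OF tp]
          define u where "u = Inf K"
          define v where "v = Sup K"
          have uv: "u \<le> x" "x \<le> v" "u \<le> v" using KK by (auto simp: u_def v_def)
          have "x \<in> {a..b}" using KK by auto
          then have xo: "x \<in> {a<..<b} - N'" using xN by (auto simp: N'_def)
          have "u \<in> {u..v}" "v \<in> {u..v}" using uv by auto
          then have "u \<in> K" "v \<in> K" using KK unfolding u_def v_def by auto
          then have "u \<in> ball x (d x)" "v \<in> ball x (d x)" using KK by blast+
          then have du: "\<bar>u - x\<bar> < d x" and dv: "\<bar>v - x\<bar> < d x" by (auto simp: dist_real_def)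
          have F: "F t = (v - u) * h' x - (h v - h u)"
            using tp xN t by (simp add: F_def k_def contK u_def v_def)
          have "\<bar>(v - u) * h' x - (h v - h u)\<bar> =
                \<bar>(h u - h x - (u - x) * h' x) - (h v - h x - (v - x) * h' x)\<bar>"
            by (simp add: algebra_simps)
          also have "\<dots> \<le> \<bar>h u - h x - (u - x) * h' x\<bar> + \<bar>h v - h x - (v - x) * h' x\<bar>"
            by (rule abs_triangle_ineq4)
          also have "\<dots> \<le> e/2 * \<bar>u - x\<bar> + e/2 * \<bar>v - x\<bar>"
            using d2[OF xo du] d2[OF xo dv] by simp
          also have "\<dots> = e/2 * (x - u) + e/2 * (v - x)" using uv by simp
          also have "\<dots> = e/2 * (v - u)" by (simp add: ring_distribs)
          finally show ?thesis using F contK[OF tp] t by (simp add: u_def v_def)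
        qed
        then have "(\<Sum>t\<in>P2. \<bar>F t\<bar>) \<le> (\<Sum>t\<in>P2. e/2 * measure lborel (snd t))"
          by (rule sum_mono)
        then have "\<bar>sum F P2\<bar> \<le> (\<Sum>t\<in>P2. e/2 * measure lborel (snd t))"
          using sum_abs[of F P2] by linarith
        also have "\<dots> \<le> (\<Sum>t\<in>p. e/2 * measure lborel (snd t))"
          using e pd(1) by (intro sum_mono2) (auto simp: P2_def)
        also have "\<dots> = e/2 * (\<Sum>t\<in>p. measure lborel (snd t))" by (rule sum_distrib_left[symmetric])
        also have "\<dots> = e/2 * (b - a)" using sumcont by simp
        finally show ?thesis .
      qed
      have B1: "\<bar>sum F P1\<bar> < e*(b-a)/2"
      proof -
        have F1: "F t = - (h (Sup (snd t)) - h (Inf (snd t)))" if "t \<in> P1" for t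
          using that by (auto simp: F_def k_def P1_def)
        have "\<bar>sum F P1\<bar> \<le> (\<Sum>t\<in>P1. \<bar>F t\<bar>)" by (rule sum_abs)
        also have "\<dots> = (\<Sum>t\<in>P1. \<bar>h (Sup (snd t)) - h (Inf (snd t))\<bar>)"
          by (rule sum.cong) (auto simp: F1)
        also have "\<dots> < e*(b-a)/2"
        proof (rule AC[OF fin1])
          fix t assume "t \<in> P1"
          then have "(fst t, snd t) \<in> p" by (simp add: P1_def)
          then show "Inf (snd t) \<le> Sup (snd t) \<and> {Inf (snd t)..Sup (snd t)} \<subseteq> {a..b}"
            using Kint[of "fst t" "snd t"] by auto
        next
          fix t t' assume tt: "t \<in> P1" "t' \<in> P1" "t \<noteq> t'"
          then have tp: "(fst t, snd t) \<in> p" "(fst t', snd t') \<in> p" by (auto simp: P1_def)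
          then have "interior (snd t) \<inter> interior (snd t') = {}"
            using pd(5)[OF tp] tt(3) by (metis prod.collapse)
          then show "{Inf (snd t)<..<Sup (snd t)} \<inter> {Inf (snd t')<..<Sup (snd t')} = {}"
            using Kint[OF tp(1)] Kint[OF tp(2)]
            by (metis interior_atLeastAtMost_real)
        next
          have "(\<Sum>t\<in>P1. Sup (snd t) - Inf (snd t)) = (\<Sum>t\<in>P1. measure lebesgue (snd t))"
          proof (rule sum.cong)
            fix t assume "t \<in> P1"
            then have tp: "(fst t, snd t) \<in> p" by (simp add: P1_def)
            have "measure lebesgue {Inf (snd t)..Sup (snd t)} = measure lborel {Inf (snd t)..Sup (snd t)}"
              by (simp add: measure_completion)
            then have "measure lebesgue (snd t) = measure lborel (snd t)"
              using Kint[OF tp] by metis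
            then show "Sup (snd t) - Inf (snd t) = measure lebesgue (snd t)" using contK[OF tp] by simp
          qed simp
          also have "\<dots> = measure lebesgue (\<Union>(snd ` P1))"
          proof (rule measure_negligible_finite_Union_image[symmetric, OF fin1])
            fix t assume "t \<in> P1"
            then have tp: "(fst t, snd t) \<in> p" by (simp add: P1_def)
            then show "snd t \<in> lmeasurable" using Kint[OF tp] by (metis lmeasurable_interval(1))
          next
            show "pairwise (\<lambda>t t'. negligible (snd t \<inter> snd t')) P1"
            proof (rule pairwiseI)
              fix t t' assume tt: "t \<in> P1" "t' \<in> P1" "t \<noteq> t'"
              then have tp: "(fst t, snd t) \<in> p" "(fst t', snd t') \<in> p" by (auto simp: P1_def)
              then have "interior (snd t) \<inter> interior (snd t') = {}"
                using pd(5)[OF tp] tt(3) by (metis prod.collapse)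
              then have "{Inf (snd t)<..<Sup (snd t)} \<inter> {Inf (snd t')<..<Sup (snd t')} = {}"
                using Kint[OF tp(1)] Kint[OF tp(2)]
                by (metis interior_atLeastAtMost_real)
              from negligible_cbox_inter[OF this]
              show "negligible (snd t \<inter> snd t')"
                using Kint[OF tp(1)] Kint[OF tp(2)] by metis
            qed
          qed
          also have "\<dots> \<le> measure lebesgue T"
          proof (rule measure_mono_fmeasurable)
            show "\<Union>(snd ` P1) \<subseteq> T"
            proof
              fix y assume "y \<in> \<Union>(snd ` P1)"
              then obtain t where t: "t \<in> P1" "y \<in> snd t" by auto
              then have tp: "(fst t, snd t) \<in> p" and "fst t \<in> N'" by (auto simp: P1_def)
              then have "fst t \<in> T" using T(2) by auto
              then show "y \<in> T" using d1 Kint[OF tp] t(2) by blast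
            qed
            show "\<Union>(snd ` P1) \<in> sets lebesgue"
            proof (rule sets.finite_Union)
              show "finite (snd ` P1)" using fin1 by simp
              show "snd ` P1 \<subseteq> sets lebesgue"
              proof
                fix K assume "K \<in> snd ` P1"
                then obtain t where "t \<in> P1" "K = snd t" by auto
                then have tp: "(fst t, snd t) \<in> p" by (simp add: P1_def)
                then show "K \<in> sets lebesgue" using Kint[OF tp] \<open>K = snd t\<close>
                  by (metis fmeasurableD lmeasurable_interval(1))
              qed
            qed
            show "T \<in> fmeasurable lebesgue" using T(3) .
          qed
          finally show "(\<Sum>t\<in>P1. Sup (snd t) - Inf (snd t)) < \<delta>" using T(4) by simp
        qed
        finally show ?thesis .
      qed
      have "\<bar>sum F P1 + sum F P2\<bar> \<le> e * (b - a)" using B1 B2 by linarith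
      then show "norm (sum (\<lambda>(x,K). measure lborel K *\<^sub>R k x) p - (h b - h a)) \<le> e * measure lborel {a..b}"
        using sum_eq ab by (simp add: content_real)
    qed
  qed
  then show ?thesis
    by (rule has_integral_spike[OF N', rotated]) (auto simp: k_def)
qed

lemma ac_subset:
  assumes "abs_continuous_on S h" "T \<subseteq> S"
  shows "abs_continuous_on T h"
  unfolding abs_continuous_on_def
proof (intro allI impI)
  fix e :: real assume e: "e > 0"
  then obtain \<delta> where d: "\<delta> > 0" and H: "\<forall>(n::nat) (a::nat \<Rightarrow> real) (b::nat \<Rightarrow> real).
        (\<forall>k<n. a k \<le> b k \<and> {a k..b k} \<subseteq> S) \<and>
        (\<forall>i<n. \<forall>j<n. i \<noteq> j \<longrightarrow> {a i<..<b i} \<inter> {a j<..<b j} = {}) \<and>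
        (\<Sum>k<n. b k - a k) < \<delta>
        \<longrightarrow> (\<Sum>k<n. \<bar>h (b k) - h (a k)\<bar>) < e"
    using assms(1) unfolding abs_continuous_on_def by blast
  show "\<exists>\<delta>>0. \<forall>(n::nat) (a::nat \<Rightarrow> real) (b::nat \<Rightarrow> real).
        (\<forall>k<n. a k \<le> b k \<and> {a k..b k} \<subseteq> T) \<and>
        (\<forall>i<n. \<forall>j<n. i \<noteq> j \<longrightarrow> {a i<..<b i} \<inter> {a j<..<b j} = {}) \<and>
        (\<Sum>k<n. b k - a k) < \<delta>
        \<longrightarrow> (\<Sum>k<n. \<bar>h (b k) - h (a k)\<bar>) < e"
  proof (intro exI conjI allI impI)
    show "\<delta> > 0" by (rule d)
    fix n :: nat and a b :: "nat \<Rightarrow> real"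
    assume A: "(\<forall>k<n. a k \<le> b k \<and> {a k..b k} \<subseteq> T) \<and>
        (\<forall>i<n. \<forall>j<n. i \<noteq> j \<longrightarrow> {a i<..<b i} \<inter> {a j<..<b j} = {}) \<and>
        (\<Sum>k<n. b k - a k) < \<delta>"
    have "(\<forall>k<n. a k \<le> b k \<and> {a k..b k} \<subseteq> S)" using A assms(2) by blast
    then show "(\<Sum>k<n. \<bar>h (b k) - h (a k)\<bar>) < e" using H A by blast
  qed
qed

lemma ac_imp_cont:
  assumes ac: "abs_continuous_on {a..b} h"
  shows "continuous_on {a..b} h"
  unfolding continuous_on_iff
proof (intro ballI allI impI)
  fix x e :: real assume x: "x \<in> {a..b}" and e: "e > 0"
  obtain \<delta> where d: "\<delta> > 0" and H: "\<And>P (l::unit \<Rightarrow> real) r. finite P \<Longrightarrow> (\<And>t. t \<in> P \<Longrightarrow> l t \<le> r t \<and> {l t..r t} \<subseteq> {a..b}) \<Longrightarrow>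
       (\<And>t t'. t \<in> P \<Longrightarrow> t' \<in> P \<Longrightarrow> t \<noteq> t' \<Longrightarrow> {l t<..<r t} \<inter> {l t'<..<r t'} = {}) \<Longrightarrow>
       (\<Sum>t\<in>P. r t - l t) < \<delta> \<Longrightarrow> (\<Sum>t\<in>P. \<bar>h (r t) - h (l t)\<bar>) < e"
    by (rule ac_sum_bound[OF ac e, where 'a=unit]) blast
  show "\<exists>d>0. \<forall>x'\<in>{a..b}. dist x' x < d \<longrightarrow> dist (h x') (h x) < e"
  proof (intro exI conjI ballI impI)
    show "\<delta> > 0" by (rule d)
    fix y assume y: "y \<in> {a..b}" and dy: "dist y x < \<delta>"
    have "(\<Sum>t\<in>{()}. \<bar>h ((\<lambda>_. max x y) t) - h ((\<lambda>_. min x y) t)\<bar>) < e"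
      by (rule H) (use x y dy in \<open>auto simp: dist_real_def\<close>)
    then show "dist (h y) (h x) < e"
      by (cases "x \<le> y") (auto simp: dist_real_def max_def min_def abs_minus_commute)
  qed
qed

lemma ac_add:
  assumes f: "abs_continuous_on S f" and g: "abs_continuous_on S g"
  shows "abs_continuous_on S (\<lambda>x. f x + g x)"
  unfolding abs_continuous_on_def
proof (intro allI impI)
  fix e :: real assume e: "e > 0"
  then have e2: "e/2 > 0" by simp
  obtain d1 where d1: "d1 > 0" and H1: "\<And>P (l::nat \<Rightarrow> real) r. finite P \<Longrightarrow> (\<And>t. t \<in> P \<Longrightarrow> l t \<le> r t \<and> {l t..r t} \<subseteq> S) \<Longrightarrow>
       (\<And>t t'. t \<in> P \<Longrightarrow> t' \<in> P \<Longrightarrow> t \<noteq> t' \<Longrightarrow> {l t<..<r t} \<inter> {l t'<..<r t'} = {}) \<Longrightarrow>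
       (\<Sum>t\<in>P. r t - l t) < d1 \<Longrightarrow> (\<Sum>t\<in>P. \<bar>f (r t) - f (l t)\<bar>) < e/2"
    by (rule ac_sum_bound[OF f e2, where 'a=nat]) blast
  obtain d2 where d2: "d2 > 0" and H2: "\<And>P (l::nat \<Rightarrow> real) r. finite P \<Longrightarrow> (\<And>t. t \<in> P \<Longrightarrow> l t \<le> r t \<and> {l t..r t} \<subseteq> S) \<Longrightarrow>
       (\<And>t t'. t \<in> P \<Longrightarrow> t' \<in> P \<Longrightarrow> t \<noteq> t' \<Longrightarrow> {l t<..<r t} \<inter> {l t'<..<r t'} = {}) \<Longrightarrow>
       (\<Sum>t\<in>P. r t - l t) < d2 \<Longrightarrow> (\<Sum>t\<in>P. \<bar>g (r t) - g (l t)\<bar>) < e/2"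
    by (rule ac_sum_bound[OF g e2, where 'a=nat]) blast
  show "\<exists>\<delta>>0. \<forall>(n::nat) (a::nat \<Rightarrow> real) (b::nat \<Rightarrow> real).
        (\<forall>k<n. a k \<le> b k \<and> {a k..b k} \<subseteq> S) \<and>
        (\<forall>i<n. \<forall>j<n. i \<noteq> j \<longrightarrow> {a i<..<b i} \<inter> {a j<..<b j} = {}) \<and>
        (\<Sum>k<n. b k - a k) < \<delta>
        \<longrightarrow> (\<Sum>k<n. \<bar>(f (b k) + g (b k)) - (f (a k) + g (a k))\<bar>) < e"
  proof (intro exI conjI allI impI)
    show "min d1 d2 > 0" using d1 d2 by simp
    fix n :: nat and a b :: "nat \<Rightarrow> real"
    assume A: "(\<forall>k<n. a k \<le> b k \<and> {a k..b k} \<subseteq> S) \<and>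
        (\<forall>i<n. \<forall>j<n. i \<noteq> j \<longrightarrow> {a i<..<b i} \<inter> {a j<..<b j} = {}) \<and>
        (\<Sum>k<n. b k - a k) < min d1 d2"
    have s1: "(\<Sum>k\<in>{..<n}. \<bar>f (b k) - f (a k)\<bar>) < e/2"
      by (rule H1) (use A in auto)
    have s2: "(\<Sum>k\<in>{..<n}. \<bar>g (b k) - g (a k)\<bar>) < e/2"
      by (rule H2) (use A in auto)
    have "(\<Sum>k<n. \<bar>(f (b k) + g (b k)) - (f (a k) + g (a k))\<bar>) \<le>
          (\<Sum>k<n. \<bar>f (b k) - f (a k)\<bar> + \<bar>g (b k) - g (a k)\<bar>)"
      by (rule sum_mono) (simp add: abs_triangle_ineq[THEN order_trans[rotated]] algebra_simps)
    also have "\<dots> < e" using s1 s2 by (simp add: sum.distrib)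
    finally show "(\<Sum>k<n. \<bar>(f (b k) + g (b k)) - (f (a k) + g (a k))\<bar>) < e" .
  qed
qed

lemma ac_const: "abs_continuous_on S (\<lambda>x. c)"
  unfolding abs_continuous_on_def by (auto intro: exI[of _ 1])

lemma ac_mult:
  assumes f: "abs_continuous_on {a..b} f" and g: "abs_continuous_on {a..b} g"
  shows "abs_continuous_on {a..b} (\<lambda>x. f x * g x)"
  unfolding abs_continuous_on_def
proof (intro allI impI)
  fix e :: real assume e: "e > 0"
  have "bounded (f ` {a..b})" "bounded (g ` {a..b})"
    using compact_continuous_image[OF ac_imp_cont[OF f]] compact_continuous_image[OF ac_imp_cont[OF g]]
    by (auto intro: compact_imp_bounded)
  then obtain Mf Mg where Mf: "Mf > 0" "\<And>x. x \<in> {a..b} \<Longrightarrow> \<bar>f x\<bar> \<le> Mf"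
    and Mg: "Mg > 0" "\<And>x. x \<in> {a..b} \<Longrightarrow> \<bar>g x\<bar> \<le> Mg"
    unfolding bounded_pos by (auto simp: real_norm_def) 
  define M where "M = Mf + Mg"
  have M: "M > 0" "\<And>x. x \<in> {a..b} \<Longrightarrow> \<bar>f x\<bar> \<le> M" "\<And>x. x \<in> {a..b} \<Longrightarrow> \<bar>g x\<bar> \<le> M"
  proof -
    show "M > 0" using Mf Mg by (simp add: M_def)
    show "\<bar>f x\<bar> \<le> M" if "x \<in> {a..b}" for x using Mf(2)[OF that] Mg(1) by (simp add: M_def)
    show "\<bar>g x\<bar> \<le> M" if "x \<in> {a..b}" for x using Mg(2)[OF that] Mf(1) by (simp add: M_def)
  qed
  have e2: "e/(2*M) > 0" using e M by simp
  obtain d1 where d1: "d1 > 0" and H1: "\<And>P (l::nat \<Rightarrow> real) r. finite P \<Longrightarrow> (\<And>t. t \<in> P \<Longrightarrow> l t \<le> r t \<and> {l t..r t} \<subseteq> {a..b}) \<Longrightarrow>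
       (\<And>t t'. t \<in> P \<Longrightarrow> t' \<in> P \<Longrightarrow> t \<noteq> t' \<Longrightarrow> {l t<..<r t} \<inter> {l t'<..<r t'} = {}) \<Longrightarrow>
       (\<Sum>t\<in>P. r t - l t) < d1 \<Longrightarrow> (\<Sum>t\<in>P. \<bar>f (r t) - f (l t)\<bar>) < e/(2*M)"
    by (rule ac_sum_bound[OF f e2, where 'a=nat]) blast
  obtain d2 where d2: "d2 > 0" and H2: "\<And>P (l::nat \<Rightarrow> real) r. finite P \<Longrightarrow> (\<And>t. t \<in> P \<Longrightarrow> l t \<le> r t \<and> {l t..r t} \<subseteq> {a..b}) \<Longrightarrow>
       (\<And>t t'. t \<in> P \<Longrightarrow> t' \<in> P \<Longrightarrow> t \<noteq> t' \<Longrightarrow> {l t<..<r t} \<inter> {l t'<..<r t'} = {}) \<Longrightarrow>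
       (\<Sum>t\<in>P. r t - l t) < d2 \<Longrightarrow> (\<Sum>t\<in>P. \<bar>g (r t) - g (l t)\<bar>) < e/(2*M)"
    by (rule ac_sum_bound[OF g e2, where 'a=nat]) blast
  show "\<exists>\<delta>>0. \<forall>(n::nat) (a'::nat \<Rightarrow> real) (b'::nat \<Rightarrow> real).
        (\<forall>k<n. a' k \<le> b' k \<and> {a' k..b' k} \<subseteq> {a..b}) \<and>
        (\<forall>i<n. \<forall>j<n. i \<noteq> j \<longrightarrow> {a' i<..<b' i} \<inter> {a' j<..<b' j} = {}) \<and>
        (\<Sum>k<n. b' k - a' k) < \<delta>
        \<longrightarrow> (\<Sum>k<n. \<bar>f (b' k) * g (b' k) - f (a' k) * g (a' k)\<bar>) < e"
  proof (intro exI conjI allI impI)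
    show "min d1 d2 > 0" using d1 d2 by simp
    fix n :: nat and a' b' :: "nat \<Rightarrow> real"
    assume A: "(\<forall>k<n. a' k \<le> b' k \<and> {a' k..b' k} \<subseteq> {a..b}) \<and>
        (\<forall>i<n. \<forall>j<n. i \<noteq> j \<longrightarrow> {a' i<..<b' i} \<inter> {a' j<..<b' j} = {}) \<and>
        (\<Sum>k<n. b' k - a' k) < min d1 d2"
    have s1: "(\<Sum>k\<in>{..<n}. \<bar>f (b' k) - f (a' k)\<bar>) < e/(2*M)"
      by (rule H1) (use A in auto)
    have s2: "(\<Sum>k\<in>{..<n}. \<bar>g (b' k) - g (a' k)\<bar>) < e/(2*M)"
      by (rule H2) (use A in auto)
    have "(\<Sum>k<n. \<bar>f (b' k) * g (b' k) - f (a' k) * g (a' k)\<bar>) \<le>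
          (\<Sum>k<n. M * \<bar>g (b' k) - g (a' k)\<bar> + M * \<bar>f (b' k) - f (a' k)\<bar>)"
    proof (rule sum_mono)
      fix k assume "k \<in> {..<n}"
      then have ab: "a' k \<in> {a..b}" "b' k \<in> {a..b}" using A by auto
      have "\<bar>f (b' k) * g (b' k) - f (a' k) * g (a' k)\<bar> =
            \<bar>f (b' k) * (g (b' k) - g (a' k)) + g (a' k) * (f (b' k) - f (a' k))\<bar>"
        by (simp add: algebra_simps)
      also have "\<dots> \<le> \<bar>f (b' k)\<bar> * \<bar>g (b' k) - g (a' k)\<bar> + \<bar>g (a' k)\<bar> * \<bar>f (b' k) - f (a' k)\<bar>"
        using abs_triangle_ineq[of "f (b' k) * (g (b' k) - g (a' k))" "g (a' k) * (f (b' k) - f (a' k))"]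
        by (simp add: abs_mult)
      also have "\<dots> \<le> M * \<bar>g (b' k) - g (a' k)\<bar> + M * \<bar>f (b' k) - f (a' k)\<bar>"
        by (intro add_mono mult_right_mono M ab) auto
      finally show "\<bar>f (b' k) * g (b' k) - f (a' k) * g (a' k)\<bar> \<le> M * \<bar>g (b' k) - g (a' k)\<bar> + M * \<bar>f (b' k) - f (a' k)\<bar>" .
    qed
    also have "\<dots> = M * (\<Sum>k<n. \<bar>g (b' k) - g (a' k)\<bar>) + M * (\<Sum>k<n. \<bar>f (b' k) - f (a' k)\<bar>)"
      by (simp add: sum.distrib sum_distrib_left)
    also have "\<dots> < M * (e/(2*M)) + M * (e/(2*M))"
      using s1 s2 M(1) by (intro add_strict_mono mult_strict_left_mono) auto
    also have "\<dots> = e" using M(1) by (simp add: field_simps)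
    finally show "(\<Sum>k<n. \<bar>f (b' k) * g (b' k) - f (a' k) * g (a' k)\<bar>) < e" .
  qed
qed

lemma ac_lipschitz:
  assumes L: "\<And>x y. x \<in> S \<Longrightarrow> y \<in> S \<Longrightarrow> \<bar>w x - w y\<bar> \<le> L * \<bar>x - y\<bar>" and L0: "L \<ge> 0"
  shows "abs_continuous_on S w"
  unfolding abs_continuous_on_def
proof (intro allI impI)
  fix e :: real assume e: "e > 0"
  show "\<exists>\<delta>>0. \<forall>(n::nat) (a::nat \<Rightarrow> real) (b::nat \<Rightarrow> real).
        (\<forall>k<n. a k \<le> b k \<and> {a k..b k} \<subseteq> S) \<and>
        (\<forall>i<n. \<forall>j<n. i \<noteq> j \<longrightarrow> {a i<..<b i} \<inter> {a j<..<b j} = {}) \<and>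
        (\<Sum>k<n. b k - a k) < \<delta>
        \<longrightarrow> (\<Sum>k<n. \<bar>w (b k) - w (a k)\<bar>) < e"
  proof (intro exI conjI allI impI)
    show "e / (L + 1) > 0" using e L0 by simp
    fix n :: nat and a b :: "nat \<Rightarrow> real"
    assume A: "(\<forall>k<n. a k \<le> b k \<and> {a k..b k} \<subseteq> S) \<and>
        (\<forall>i<n. \<forall>j<n. i \<noteq> j \<longrightarrow> {a i<..<b i} \<inter> {a j<..<b j} = {}) \<and>
        (\<Sum>k<n. b k - a k) < e / (L + 1)"
    have "(\<Sum>k<n. \<bar>w (b k) - w (a k)\<bar>) \<le> (\<Sum>k<n. L * (b k - a k))"
    proof (rule sum_mono)
      fix k assume "k \<in> {..<n}"
      then have ak: "a k \<le> b k" "{a k..b k} \<subseteq> S" using A by auto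
      then have "a k \<in> S" "b k \<in> S" by auto
      then show "\<bar>w (b k) - w (a k)\<bar> \<le> L * (b k - a k)" using L[of "b k" "a k"] ak by simp
    qed
    also have "\<dots> = L * (\<Sum>k<n. b k - a k)" by (simp add: sum_distrib_left)
    also have "\<dots> \<le> L * (e / (L + 1))" using A L0 by (intro mult_left_mono) auto
    also have "\<dots> < e" using e L0 by (simp add: field_simps)
    finally show "(\<Sum>k<n. \<bar>w (b k) - w (a k)\<bar>) < e" .
  qed
qed

lemma ac_C1:
  assumes der: "\<And>x. x \<in> {a..b} \<Longrightarrow> (w has_real_derivative w' x) (at x)"
    and cont: "continuous_on {a..b} w'"
  shows "abs_continuous_on {a..b} w"
proof -
  have "bounded (w' ` {a..b})"
    using compact_continuous_image[OF cont] by (auto intro: compact_imp_bounded)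
  then obtain B where B: "B > 0" "\<And>x. x \<in> {a..b} \<Longrightarrow> norm (w' x) \<le> B"
    unfolding bounded_pos by auto
  have "norm (w x - w y) \<le> B * norm (x - y)" if "x \<in> {a..b}" "y \<in> {a..b}" for x y
    by (rule field_differentiable_bound[of "{a..b}" w w' B])
       (use that B der in \<open>auto intro: has_field_derivative_at_within\<close>)
  then show ?thesis
    by (intro ac_lipschitz[of _ w B]) (use B in auto)
qed

lemma tan_sq:
  assumes "cos y \<noteq> 0"
  shows "inverse (cos y ^ 2) = 1 + tan y ^ 2"
proof -
  have "sin y ^ 2 + cos y ^ 2 = 1" by simp
  then show ?thesis using assms by (simp add: tan_def field_simps)
qed

lemma nonneg_int0_negligible:
  fixes \<phi> :: "real \<Rightarrow> real"
  assumes int: "(\<phi> has_integral 0) S" and nn: "\<And>x. x \<in> S \<Longrightarrow> \<phi> x \<ge> 0"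
  shows "negligible {x\<in>S. \<phi> x \<noteq> 0}"
proof -
  note intl = has_integral_integrable[OF int]
  have af: "\<phi> absolutely_integrable_on S"
    using nn by (intro absolutely_integrable_onI intl integrable_eq[OF intl]) simp
  have "0 = integral S \<phi>" using int by (simp add: integral_unique)
  also have "integral S \<phi> = set_lebesgue_integral lebesgue S \<phi>"
    using af by (intro set_lebesgue_integral_eq_integral(2)[symmetric])
  finally have "set_lebesgue_integral lebesgue S \<phi> = 0" by simp
  moreover have "set_lebesgue_integral lebesgue S \<phi> = 0 \<longleftrightarrow> (AE x in lebesgue. indicator S x *\<^sub>R \<phi> x = 0)"
    unfolding set_lebesgue_integral_def
  proof (rule integral_nonneg_eq_0_iff_AE)
    show "integrable lebesgue (\<lambda>x. indicat_real S x *\<^sub>R \<phi> x)"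
      by (metis af set_integrable_def)
  qed (use nn in \<open>auto simp: indicator_def\<close>)
  ultimately have "AE x in lebesgue. indicator S x *\<^sub>R \<phi> x = 0" by simp
  then obtain M where M: "M \<in> null_sets lebesgue" "{x \<in> space lebesgue. \<not> (indicator S x *\<^sub>R \<phi> x = 0)} \<subseteq> M"
    by (auto simp: eventually_ae_filter)
  have "{x\<in>S. \<phi> x \<noteq> 0} \<subseteq> M" using M(2) by (auto simp: indicator_def)
  moreover have "negligible M" using M(1) negligible_iff_null_sets by blast
  ultimately show ?thesis using negligible_subset by blast
qed

lemma piece:
  fixes g g' :: "real \<Rightarrow> real"
  assumes pq: "p \<le> q" and ac: "abs_continuous_on {p..q} g" and N: "negligible N"
    and der: "\<And>x. x \<in> {p<..<q} - N \<Longrightarrow> (g has_real_derivative g' x) (at x)"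
    and int: "(\<lambda>x. (g' x)^2) integrable_on {p..q}"
    and cosne: "\<And>x. x \<in> {p..q} \<Longrightarrow> cos (x - m) \<noteq> 0"
  shows "((\<lambda>x. (g' x + tan (x - m) * g x)^2) has_integral
     (integral {p..q} (\<lambda>x. (g' x)^2) - integral {p..q} (\<lambda>x. (g x)^2) + (tan (q - m) * (g q)^2 - tan (p - m) * (g p)^2))) {p..q}"
proof -
  define w where "w x = tan (x - m)" for x
  have wder: "(w has_real_derivative inverse (cos (x-m)^2)) (at x)" if "x \<in> {p..q}" for x
  proof -
    have "((\<lambda>x. x - m) has_real_derivative 1) (at x)" by (auto intro!: derivative_eq_intros)
    from DERIV_chain2[OF DERIV_tan[OF cosne[OF that]] this]
    show ?thesis by (simp add: w_def[abs_def])
  qed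
  have wcont: "continuous_on {p..q} (\<lambda>x. inverse (cos (x-m)^2))"
    by (intro continuous_intros) (auto simp: cosne)
  have acw: "abs_continuous_on {p..q} w" by (rule ac_C1[OF wder wcont])
  have gcont: "continuous_on {p..q} g" by (rule ac_imp_cont[OF ac])
  define h where "h x = w x * (g x * g x)" for x
  have ach: "abs_continuous_on {p..q} h"
    unfolding h_def by (intro ac_mult acw ac)
  define h' where "h' x = inverse (cos (x-m)^2) * (g x)^2 + 2 * w x * g x * g' x" for x
  have hder: "(h has_real_derivative h' x) (at x)" if x: "x \<in> {p<..<q} - N" for x
  proof -
    have "x \<in> {p..q}" using x by auto
    note D = DERIV_mult[OF wder[OF \<open>x \<in> {p..q}\<close>] DERIV_mult[OF der[OF x] der[OF x]]]
    moreover have "inverse (cos (x-m)^2) * (g x * g x) + (g' x * g x + g' x * g x) * w x = h' x"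
      by (simp add: h'_def power2_eq_square algebra_simps)
    ultimately show ?thesis by (simp add: h_def[abs_def])
  qed
  have fI: "(h' has_integral h q - h p) {p..q}" by (rule ftc_ac[OF pq ach N hder])
  have g2: "((\<lambda>x. (g x)^2) has_integral integral {p..q} (\<lambda>x. (g x)^2)) {p..q}"
    by (intro integrable_integral integrable_continuous_interval continuous_intros gcont)
  have d2: "((\<lambda>x. (g' x)^2) has_integral integral {p..q} (\<lambda>x. (g' x)^2)) {p..q}"
    using int by (rule integrable_integral)
  have "((\<lambda>x. (g' x)^2 + h' x - (g x)^2) has_integral
          (integral {p..q} (\<lambda>x. (g' x)^2) + (h q - h p) - integral {p..q} (\<lambda>x. (g x)^2))) {p..q}"
    by (intro has_integral_diff has_integral_add d2 fI g2)
  moreover have "(g' x)^2 + h' x - (g x)^2 = (g' x + tan (x - m) * g x)^2" if "x \<in> {p..q}" for x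
  proof -
    have "inverse (cos (x-m)^2) = 1 + tan (x-m)^2" by (rule tan_sq[OF cosne[OF that]])
    then show ?thesis by (simp add: h'_def w_def power2_eq_square algebra_simps)
  qed
  ultimately have "((\<lambda>x. (g' x + tan (x - m) * g x)^2) has_integral
          (integral {p..q} (\<lambda>x. (g' x)^2) + (h q - h p) - integral {p..q} (\<lambda>x. (g x)^2))) {p..q}"
    using has_integral_eq by (smt (verit, ccfv_SIG))
  moreover have "integral {p..q} (\<lambda>x. (g' x)^2) + (h q - h p) - integral {p..q} (\<lambda>x. (g x)^2)
     = integral {p..q} (\<lambda>x. (g' x)^2) - integral {p..q} (\<lambda>x. (g x)^2) + (tan (q - m) * (g q)^2 - tan (p - m) * (g p)^2)"
    by (simp add: h_def w_def power2_eq_square)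
  ultimately show ?thesis by simp
qed

lemma piece_zero:
  fixes g g' :: "real \<Rightarrow> real"
  assumes pq: "p \<le> q" and ac: "abs_continuous_on {p..q} g" and N: "negligible N"
    and der: "\<And>x. x \<in> {p<..<q} - N \<Longrightarrow> (g has_real_derivative g' x) (at x)"
    and cosne: "\<And>x. x \<in> {p..q} \<Longrightarrow> cos (x - m) \<noteq> 0"
    and int0: "((\<lambda>x. (g' x + tan (x - m) * g x)^2) has_integral 0) {p..q}"
    and gz: "g p = 0 \<or> g q = 0"
  shows "\<forall>x\<in>{p..q}. g x = 0"
proof -
  define Z where "Z = {x\<in>{p..q}. (g' x + tan (x - m) * g x)^2 \<noteq> 0}"
  have Z: "negligible Z" unfolding Z_def by (rule nonneg_int0_negligible[OF int0]) simp
  have NZ: "negligible (N \<union> Z)" using N Z by (rule negligible_Un)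
  define v where "v x = inverse (cos (x - m))" for x
  define v' where "v' x = sin (x - m) / (cos (x - m))^2" for x
  have vder: "(v has_real_derivative v' x) (at x)" if "x \<in> {p..q}" for x
  proof -
    have c: "cos (x - m) \<noteq> 0" by (rule cosne[OF that])
    have "((\<lambda>x. inverse (cos (x - m))) has_real_derivative
           - (inverse (cos (x - m)) * (- sin (x - m) * 1) * inverse (cos (x - m)))) (at x)"
      by (intro DERIV_inverse_fun DERIV_chain2[OF DERIV_cos] derivative_eq_intros c) auto
    moreover have "- (inverse (cos (x - m)) * (- sin (x - m) * 1) * inverse (cos (x - m))) = v' x"
      using c by (simp add: v'_def power2_eq_square field_simps)
    ultimately show ?thesis by (simp add: v_def[abs_def])
  qed
  have vcont: "continuous_on {p..q} v'"
    unfolding v'_def by (intro continuous_intros) (auto simp: cosne)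
  define u where "u x = g x * v x" for x
  have acu: "abs_continuous_on {p..q} u"
    unfolding u_def by (intro ac_mult ac ac_C1[OF vder vcont])
  have uder: "(u has_real_derivative 0) (at x)" if x: "x \<in> {p<..<q} - (N \<union> Z)" for x
  proof -
    have xpq: "x \<in> {p..q}" using x by auto
    have c: "cos (x - m) \<noteq> 0" by (rule cosne[OF xpq])
    have "x \<notin> Z" using x by auto
    then have z: "g' x + tan (x - m) * g x = 0" using xpq by (simp add: Z_def)
    have D: "(u has_real_derivative (g' x * v x + v' x * g x)) (at x)"
      using DERIV_mult[OF der vder[OF xpq]] x by (simp add: u_def[abs_def])
    have "g' x * v x + v' x * g x = (g' x + tan (x - m) * g x) / cos (x - m)"
      using c by (simp add: v_def v'_def tan_def power2_eq_square field_simps)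
    also have "\<dots> = 0" using z by simp
    finally show ?thesis using D by simp
  qed
  have const: "u y = u p" "u q = u y" if y: "y \<in> {p..q}" for y
  proof -
    have "((\<lambda>x. 0) has_integral u y - u p) {p..y}"
      by (rule ftc_ac[OF _ ac_subset[OF acu] NZ]) (use y uder in auto)
    then show "u y = u p" by (simp add: has_integral_0_eq)
    have "((\<lambda>x. 0) has_integral u q - u y) {y..q}"
      by (rule ftc_ac[OF _ ac_subset[OF acu] NZ]) (use y uder in auto)
    then show "u q = u y" by (simp add: has_integral_0_eq)
  qed
  show ?thesis
  proof
    fix y assume y: "y \<in> {p..q}"
    have "u p = 0 \<or> u q = 0" using gz by (auto simp: u_def)
    then have "u y = 0" using const[OF y] by auto
    then show "g y = 0" using cosne[OF y] by (simp add: u_def v_def)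
  qed
qed

lemma zero_between:
  fixes g :: "real \<Rightarrow> real"
  assumes cont: "continuous_on {a..b} g" and s: "s \<in> {a..b}" and t: "t \<in> {a..b}"
    and gs: "g s < 0" and gt: "g t > 0"
  shows "\<exists>z. min s t < z \<and> z < max s t \<and> g z = 0"
proof (cases "s \<le> t")
  case True
  have "continuous_on {s..t} g" using cont s t by (auto intro: continuous_on_subset)
  then obtain z where z: "s \<le> z" "z \<le> t" "g z = 0" using IVT'[of g s 0 t] gs gt True by auto
  then have "z \<noteq> s" "z \<noteq> t" using gs gt by auto
  then show ?thesis using z True by (intro exI[of _ z]) auto
next
  case False
  have "continuous_on {t..s} g" using cont s t by (auto intro: continuous_on_subset)
  then obtain z where z: "t \<le> z" "z \<le> s" "g z = 0" using IVT2'[of g s 0 t] gs gt False by auto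
  then have "z \<noteq> s" "z \<noteq> t" using gs gt by auto
  then show ?thesis using z False by (intro exI[of _ z]) auto
qed

lemma two_zeros:
  fixes g :: "real \<Rightarrow> real"
  assumes cont: "continuous_on {a..b} g" and ab: "a < b" and int0: "(g has_integral 0) {a..b}"
    and per: "g a = g b"
  shows "\<exists>z1 z2. a \<le> z1 \<and> z1 < z2 \<and> z2 \<le> b \<and> z2 - z1 < b - a \<and> g z1 = 0 \<and> g z2 = 0"
proof -
  have ne: "box a b \<noteq> {}" using ab by simp
  show ?thesis
  proof (cases "\<forall>x\<in>{a<..<b}. g x \<ge> 0")
    case True
    have "g x = 0" if "x \<in> {a..b}" for x
      using has_integral_0_cbox_imp_0[of a b g x] cont True int0 ne that by auto
    then show ?thesis using ab by (intro exI[of _ a] exI[of _ "(a+b)/2"]) auto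
  next
    case F1: False
    show ?thesis
    proof (cases "\<forall>x\<in>{a<..<b}. g x \<le> 0")
      case True
      have "(\<lambda>x. - g x) x = 0" if "x \<in> {a..b}" for x
        using has_integral_0_cbox_imp_0[of a b "\<lambda>x. - g x" x] cont True has_integral_neg[OF int0] ne that
        by (auto intro: continuous_intros)
      then have "g x = 0" if "x \<in> {a..b}" for x using that by simp
      then show ?thesis using ab by (intro exI[of _ a] exI[of _ "(a+b)/2"]) auto
    next
      case False
      then obtain s where s: "s \<in> {a<..<b}" "g s > 0" by (auto simp: not_le)
      from F1 obtain t where t: "t \<in> {a<..<b}" "g t < 0" by (auto simp: not_le)
      have sI: "s \<in> {a..b}" and tI: "t \<in> {a..b}" and aI: "a \<in> {a..b}" and bI: "b \<in> {a..b}"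
        using s t ab by auto
      consider "g a > 0" | "g a < 0" | "g a = 0" by linarith
      then show ?thesis
      proof cases
        case 1
        obtain z1 where z1: "min t a < z1" "z1 < max t a" "g z1 = 0"
          using zero_between[OF cont tI aI t(2) 1] by blast
        obtain z2 where z2: "min t b < z2" "z2 < max t b" "g z2 = 0"
          using zero_between[OF cont tI bI t(2)] 1 per by auto
        show ?thesis using z1 z2 t by (intro exI[of _ z1] exI[of _ z2]) auto
      next
        case 2
        obtain z1 where z1: "min a s < z1" "z1 < max a s" "g z1 = 0"
          using zero_between[OF cont aI sI 2 s(2)] by blast
        obtain z2 where z2: "min b s < z2" "z2 < max b s" "g z2 = 0"
          using zero_between[OF cont bI sI _ s(2)] 2 per by auto
        show ?thesis using z1 z2 s by (intro exI[of _ z1] exI[of _ z2]) auto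
      next
        case 3
        obtain z where z: "min t s < z" "z < max t s" "g z = 0"
          using zero_between[OF cont tI sI t(2) s(2)] by blast
        show ?thesis using z s t 3 ab by (intro exI[of _ a] exI[of _ z]) auto
      qed
    qed
  qed
qed

lemma core:
  fixes f f' :: "real \<Rightarrow> real"
  assumes ac: "abs_continuous_on {-pi/2..pi/2} f" and N: "negligible N"
    and der: "\<And>x. x \<in> {-pi/2<..<pi/2} - N \<Longrightarrow> (f has_real_derivative f' x) (at x)"
    and int: "(\<lambda>x. (f' x)^2) integrable_on {-pi/2..pi/2}"
    and bc: "f (-pi/2) = f (pi/2)"
  shows "2 * (integral {-pi/2..pi/2} f)^2 - pi * (integral {-pi/2..pi/2} (\<lambda>x. (f x)^2) - integral {-pi/2..pi/2} (\<lambda>x. (f' x)^2)) \<ge> 0 \<and>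
    (2 * (integral {-pi/2..pi/2} f)^2 - pi * (integral {-pi/2..pi/2} (\<lambda>x. (f x)^2) - integral {-pi/2..pi/2} (\<lambda>x. (f' x)^2)) = 0
       \<longrightarrow> (\<forall>x\<in>{-pi/2..pi/2}. f x = 0))"
proof -
  define A where "A = integral {-pi/2..pi/2} f"
  define B where "B = integral {-pi/2..pi/2} (\<lambda>x. (f x)^2)"
  define C where "C = integral {-pi/2..pi/2} (\<lambda>x. (f' x)^2)"
  have pi: "pi > 0" by (rule pi_gt_zero)
  have fc: "continuous_on {-pi/2..pi/2} f" by (rule ac_imp_cont[OF ac])
  have hA: "(f has_integral A) {-pi/2..pi/2}"
    unfolding A_def by (intro integrable_integral integrable_continuous_interval fc)
  have hB: "((\<lambda>x. (f x)^2) has_integral B) {-pi/2..pi/2}"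
    unfolding B_def by (intro integrable_integral integrable_continuous_interval continuous_intros fc)
  have hC: "((\<lambda>x. (f' x)^2) has_integral C) {-pi/2..pi/2}"
    unfolding C_def using int by (rule integrable_integral)
  define c where "c = A / pi"
  define g where "g x = f x - c" for x
  have contI: "measure lborel {-pi/2..pi/2} = pi" by (simp add: content_real)
  have gint0: "(g has_integral 0) {-pi/2..pi/2}"
  proof -
    have "(g has_integral (A - measure lborel {-pi/2..pi/2} *\<^sub>R c)) {-pi/2..pi/2}"
      unfolding g_def by (intro has_integral_diff hA has_integral_const_real)
    moreover have "A - measure lborel {-pi/2..pi/2} *\<^sub>R c = 0" using pi by (simp add: contI c_def)
    ultimately show ?thesis by simp
  qed
  have hG: "((\<lambda>x. (g x)^2) has_integral (B - A^2/pi)) {-pi/2..pi/2}"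
  proof -
    have H0: "((\<lambda>x. (f x)^2 - 2 * c * f x + c^2) has_integral (B - 2 * c * A + measure lborel {-pi/2..pi/2} *\<^sub>R c^2)) {-pi/2..pi/2}"
      by (intro has_integral_add has_integral_diff hB has_integral_mult_right hA has_integral_const_real)
    have eqv: "B - 2 * c * A + measure lborel {-pi/2..pi/2} *\<^sub>R c^2 = B - A^2/pi"
      using pi by (simp add: contI c_def power2_eq_square field_simps)
    have pw: "(f x)^2 - 2 * c * f x + c^2 = (g x)^2" for x
      by (simp add: g_def power2_eq_square algebra_simps)
    have "((\<lambda>x. (g x)^2) has_integral (B - 2 * c * A + measure lborel {-pi/2..pi/2} *\<^sub>R c^2)) {-pi/2..pi/2}"
      by (rule has_integral_eq[OF _ H0]) (rule pw)
    then show ?thesis unfolding eqv .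
  qed
  have gc: "continuous_on {-pi/2..pi/2} g" unfolding g_def by (intro continuous_intros fc)
  have gper: "g (-pi/2) = g (pi/2)" using bc by (simp add: g_def)
  have "-pi/2 < pi/2" using pi by simp
  from two_zeros[OF gc this gint0 gper] obtain z1 z2 where
    z: "-pi/2 \<le> z1" "z1 < z2" "z2 \<le> pi/2" "z2 - z1 < pi/2 - -pi/2" "g z1 = 0" "g z2 = 0"
    by blast
  have acg: "abs_continuous_on {-pi/2..pi/2} g"
  proof -
    have "abs_continuous_on {-pi/2..pi/2} (\<lambda>x. f x + (- c))" by (intro ac_add ac ac_const)
    then show ?thesis by (simp add: g_def[abs_def])
  qed
  have derg: "(g has_real_derivative f' x) (at x)" if "x \<in> {-pi/2<..<pi/2} - N" for x
    using DERIV_diff[OF der[OF that] DERIV_const] by (simp add: g_def[abs_def])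
  have PC: "((\<lambda>x. (f' x + tan (x - m) * g x)^2) has_integral
     (integral {p..q} (\<lambda>x. (f' x)^2) - integral {p..q} (\<lambda>x. (g x)^2) + (tan (q - m) * (g q)^2 - tan (p - m) * (g p)^2))) {p..q}"
    if pq: "-pi/2 \<le> p" "p \<le> q" "q \<le> pi/2" and cs: "\<And>x. x \<in> {p..q} \<Longrightarrow> cos (x - m) \<noteq> 0" for p q m
  proof (rule piece[OF pq(2) _ N _ _ cs])
    show "abs_continuous_on {p..q} g" by (rule ac_subset[OF acg]) (use pq in auto)
    show "(g has_real_derivative f' x) (at x)" if "x \<in> {p<..<q} - N" for x
      using that pq by (intro derg) auto
    show "(\<lambda>x. (f' x)^2) integrable_on {p..q}"
      by (rule integrable_on_subinterval[OF int]) (use pq in auto)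
  qed auto
  have PZ: "\<forall>x\<in>{p..q}. g x = 0"
    if pq: "-pi/2 \<le> p" "p \<le> q" "q \<le> pi/2" and cs: "\<And>x. x \<in> {p..q} \<Longrightarrow> cos (x - m) \<noteq> 0"
      and i0: "((\<lambda>x. (f' x + tan (x - m) * g x)^2) has_integral 0) {p..q}" and gz: "g p = 0 \<or> g q = 0" for p q m
  proof (rule piece_zero[OF pq(2) _ N _ cs i0 gz])
    show "abs_continuous_on {p..q} g" by (rule ac_subset[OF acg]) (use pq in auto)
    show "(g has_real_derivative f' x) (at x)" if "x \<in> {p<..<q} - N" for x
      using that pq by (intro derg) auto
  qed
  have cosI: "cos t \<noteq> 0" if "-(pi/2) < t" "t < pi/2" for t
    using cos_gt_zero_pi[OF that] by simp
  define mi where "mi = (z1 + z2) / 2"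
  define mo where "mo = (z1 + z2 + pi) / 2"
  have cs1: "cos (x - (mo - pi)) \<noteq> 0" if "x \<in> {-pi/2..z1}" for x
  proof -
    from that have "-pi/2 \<le> x" "x \<le> z1" by auto
    then show ?thesis using z unfolding mo_def by (intro cosI) (simp_all add: field_simps)
  qed
  have cs2: "cos (x - mi) \<noteq> 0" if "x \<in> {z1..z2}" for x
  proof -
    from that have "z1 \<le> x" "x \<le> z2" by auto
    then show ?thesis using z unfolding mi_def by (intro cosI) (simp_all add: field_simps)
  qed
  have cs3: "cos (x - mo) \<noteq> 0" if "x \<in> {z2..pi/2}" for x
  proof -
    from that have "z2 \<le> x" "x \<le> pi/2" by auto
    then show ?thesis using z unfolding mo_def by (intro cosI) (simp_all add: field_simps)
  qed
  define S1 where "S1 = (\<lambda>x. (f' x + tan (x - (mo - pi)) * g x)^2)"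
  define S2 where "S2 = (\<lambda>x. (f' x + tan (x - mi) * g x)^2)"
  define S3 where "S3 = (\<lambda>x. (f' x + tan (x - mo) * g x)^2)"
  define V1 where "V1 = integral {-pi/2..z1} (\<lambda>x. (f' x)^2) - integral {-pi/2..z1} (\<lambda>x. (g x)^2) + (tan (z1 - (mo - pi)) * (g z1)^2 - tan (-pi/2 - (mo - pi)) * (g (-pi/2))^2)"
  define V2 where "V2 = integral {z1..z2} (\<lambda>x. (f' x)^2) - integral {z1..z2} (\<lambda>x. (g x)^2) + (tan (z2 - mi) * (g z2)^2 - tan (z1 - mi) * (g z1)^2)"
  define V3 where "V3 = integral {z2..pi/2} (\<lambda>x. (f' x)^2) - integral {z2..pi/2} (\<lambda>x. (g x)^2) + (tan (pi/2 - mo) * (g (pi/2))^2 - tan (z2 - mo) * (g z2)^2)"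
  have I1: "(S1 has_integral V1) {-pi/2..z1}"
    unfolding S1_def V1_def using z by (intro PC cs1) auto
  have I2: "(S2 has_integral V2) {z1..z2}"
    unfolding S2_def V2_def using z by (intro PC cs2) auto
  have I3: "(S3 has_integral V3) {z2..pi/2}"
    unfolding S3_def V3_def using z by (intro PC cs3) auto
  have V1nn: "V1 \<ge> 0" using has_integral_nonneg[OF I1] by (simp add: S1_def)
  have V2nn: "V2 \<ge> 0" using has_integral_nonneg[OF I2] by (simp add: S2_def)
  have V3nn: "V3 \<ge> 0" using has_integral_nonneg[OF I3] by (simp add: S3_def)
  have Csum: "integral {-pi/2..z1} (\<lambda>x. (f' x)^2) + integral {z1..z2} (\<lambda>x. (f' x)^2) + integral {z2..pi/2} (\<lambda>x. (f' x)^2) = C"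
  proof -
    have i2: "(\<lambda>x. (f' x)^2) integrable_on {z1..pi/2}"
      by (rule integrable_on_subinterval[OF int]) (use z in auto)
    have "integral {z1..z2} (\<lambda>x. (f' x)^2) + integral {z2..pi/2} (\<lambda>x. (f' x)^2) = integral {z1..pi/2} (\<lambda>x. (f' x)^2)"
      using z by (intro Henstock_Kurzweil_Integration.integral_combine i2) auto
    moreover have "integral {-pi/2..z1} (\<lambda>x. (f' x)^2) + integral {z1..pi/2} (\<lambda>x. (f' x)^2) = C"
      unfolding C_def using z by (intro Henstock_Kurzweil_Integration.integral_combine int) auto
    ultimately show ?thesis by simp
  qed
  have Gsum: "integral {-pi/2..z1} (\<lambda>x. (g x)^2) + integral {z1..z2} (\<lambda>x. (g x)^2) + integral {z2..pi/2} (\<lambda>x. (g x)^2) = B - A^2/pi"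
  proof -
    have intg: "(\<lambda>x. (g x)^2) integrable_on {-pi/2..pi/2}" using hG by blast
    have i2: "(\<lambda>x. (g x)^2) integrable_on {z1..pi/2}"
      by (rule integrable_on_subinterval[OF intg]) (use z in auto)
    have "integral {z1..z2} (\<lambda>x. (g x)^2) + integral {z2..pi/2} (\<lambda>x. (g x)^2) = integral {z1..pi/2} (\<lambda>x. (g x)^2)"
      using z by (intro Henstock_Kurzweil_Integration.integral_combine i2) auto
    moreover have "integral {-pi/2..z1} (\<lambda>x. (g x)^2) + integral {z1..pi/2} (\<lambda>x. (g x)^2) = integral {-pi/2..pi/2} (\<lambda>x. (g x)^2)"
      using z by (intro Henstock_Kurzweil_Integration.integral_combine intg) auto
    moreover have "integral {-pi/2..pi/2} (\<lambda>x. (g x)^2) = B - A^2/pi" using hG by (rule integral_unique)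
    ultimately show ?thesis by simp
  qed
  have targ: "-pi/2 - (mo - pi) = pi/2 - mo" by simp
  have Vsum: "V1 + V2 + V3 = C - B + A^2/pi"
    using Csum Gsum z(5,6) gper unfolding V1_def V2_def V3_def targ by simp
  have E: "2 * A^2 - pi * (B - C) = pi * (V1 + V2 + V3) + A^2"
  proof -
    have E1: "pi * (V1 + V2 + V3) = pi * (C - B + A^2/pi)" by (simp only: Vsum)
    have E2: "pi * (C - B + A^2/pi) = pi*C - pi*B + A^2" using pi by (simp add: field_simps)
    show ?thesis using E1 E2 by (simp add: algebra_simps)
  qed
  have part1: "2 * A^2 - pi * (B - C) \<ge> 0"
    unfolding E using pi V1nn V2nn V3nn by (intro add_nonneg_nonneg mult_nonneg_nonneg) auto
  have part2: "\<forall>x\<in>{-pi/2..pi/2}. f x = 0" if E0: "2 * A^2 - pi * (B - C) = 0"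
  proof -
    have s0: "pi * (V1 + V2 + V3) \<ge> 0" using pi V1nn V2nn V3nn by simp
    have "A^2 \<ge> 0" by simp
    then have "A^2 = 0" "pi * (V1 + V2 + V3) = 0" using E0 E s0 by linarith+
    then have A0: "A = 0" and "V1 + V2 + V3 = 0" using pi by auto
    then have V0: "V1 = 0" "V2 = 0" "V3 = 0" using V1nn V2nn V3nn by linarith+
    have g1: "\<forall>x\<in>{-pi/2..z1}. g x = 0"
      by (rule PZ[OF _ _ _ cs1]) (use z I1 V0 in \<open>auto simp: S1_def\<close>)
    have g2: "\<forall>x\<in>{z1..z2}. g x = 0"
      by (rule PZ[OF _ _ _ cs2]) (use z I2 V0 in \<open>auto simp: S2_def\<close>)
    have g3: "\<forall>x\<in>{z2..pi/2}. g x = 0"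
      by (rule PZ[OF _ _ _ cs3]) (use z I3 V0 in \<open>auto simp: S3_def\<close>)
    show ?thesis
    proof
      fix x assume x: "x \<in> {-pi/2..pi/2}"
      have "g x = 0"
      proof (cases "x \<le> z1")
        case True then show ?thesis using g1 x by auto
      next
        case False
        show ?thesis
        proof (cases "x \<le> z2")
          case True then show ?thesis using g2 x False by auto
        next
          case False then show ?thesis using g3 x by auto
        qed
      qed
      then show "f x = 0" using A0 by (simp add: g_def c_def)
    qed
  qed
  show ?thesis using part1 part2 unfolding A_def B_def C_def by blast
qed

theorem theorem3p2:
  fixes f f' :: "real \<Rightarrow> real"
  assumes ac: "abs_continuous_on {-pi/2..pi/2} f"
    and deriv: "AE x in lborel. x \<in> {-pi/2<..<pi/2} \<longrightarrow> (f has_real_derivative f' x) (at x)"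
    and meas: "set_borel_measurable lborel {-pi/2..pi/2} f'"
    and L2: "set_integrable lborel {-pi/2..pi/2} (\<lambda>x. (f' x)\<^sup>2)"
    and bc: "f (-pi/2) = f (pi/2)"
  shows "2 * (LINT x:{-pi/2..pi/2}|lborel. f x)\<^sup>2
           - pi * (LINT x:{-pi/2..pi/2}|lborel. (f x)\<^sup>2 - (f' x)\<^sup>2) \<ge> 0
       \<and> (2 * (LINT x:{-pi/2..pi/2}|lborel. f x)\<^sup>2
           - pi * (LINT x:{-pi/2..pi/2}|lborel. (f x)\<^sup>2 - (f' x)\<^sup>2) = 0
          \<longrightarrow> (\<forall>x\<in>{-pi/2..pi/2}. f x = 0))"
proof -
  from deriv obtain N where N1: "{x \<in> space lborel. \<not> (x \<in> {-pi/2<..<pi/2} \<longrightarrow> (f has_real_derivative f' x) (at x))} \<subseteq> N"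
    and N2: "emeasure lborel N = 0" and N3: "N \<in> sets lborel"
    by (rule AE_E)
  have "N \<in> null_sets lborel" using N2 N3 by (simp add: null_sets_def)
  then have "N \<in> null_sets lebesgue" by (rule null_sets_completionI)
  then have N: "negligible N" by (simp add: negligible_iff_null_sets)
  have der: "(f has_real_derivative f' x) (at x)" if "x \<in> {-pi/2<..<pi/2} - N" for x
    using N1 that by auto
  have int: "(\<lambda>x. (f' x)^2) integrable_on {-pi/2..pi/2}"
    using set_borel_integral_eq_integral(1)[OF L2] .
  have fc: "continuous_on {-pi/2..pi/2} f" by (rule ac_imp_cont[OF ac])
  have sf: "set_integrable lborel {-pi/2..pi/2} f"
    unfolding set_integrable_def by (rule borel_integrable_compact[OF compact_Icc fc])
  have sf2: "set_integrable lborel {-pi/2..pi/2} (\<lambda>x. (f x)^2)"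
    unfolding set_integrable_def by (rule borel_integrable_compact[OF compact_Icc]) (intro continuous_intros fc)
  have sd: "set_integrable lborel {-pi/2..pi/2} (\<lambda>x. (f x)^2 - (f' x)^2)"
    by (rule set_integral_diff(1)[OF sf2 L2])
  have eA: "(LINT x:{-pi/2..pi/2}|lborel. f x) = integral {-pi/2..pi/2} f"
    by (rule set_borel_integral_eq_integral(2)[OF sf])
  have eBC: "(LINT x:{-pi/2..pi/2}|lborel. (f x)\<^sup>2 - (f' x)\<^sup>2) =
      integral {-pi/2..pi/2} (\<lambda>x. (f x)^2) - integral {-pi/2..pi/2} (\<lambda>x. (f' x)^2)"
  proof -
    have "(LINT x:{-pi/2..pi/2}|lborel. (f x)\<^sup>2 - (f' x)\<^sup>2) = integral {-pi/2..pi/2} (\<lambda>x. (f x)^2 - (f' x)^2)"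
      by (rule set_borel_integral_eq_integral(2)[OF sd])
    also have "\<dots> = integral {-pi/2..pi/2} (\<lambda>x. (f x)^2) - integral {-pi/2..pi/2} (\<lambda>x. (f' x)^2)"
      by (rule integral_diff[OF set_borel_integral_eq_integral(1)[OF sf2] int])
    finally show ?thesis .
  qed
  show ?thesis unfolding eA eBC by (rule core[OF ac N der int bc])
qed

end
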